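(* Let $G$ be a factor-critical equimatchable graph. If $G$ is edge-stable, then $\mathrm{diam}(G)\le 2$.
   Context: All graphs are finite and simple. A graph is equimatchable if all its maximal matchings have the same cardinality; an equimatchable graph $G$ is edge-stable if $G\setminus e$ (delete edge $e$, keep vertices) is equimatchable for every $e\in E(G)$. A graph $G$ is factor-critical if $G-v$ has a perfect matching for every $v\in V(G)$. $\mathrm{diam}(G)=\max\{d(u,v):u,v\in V(G)\}$, where $d(u,v)$ is the length of a shortest $u$–$v$ path. *)

theory Defs
  imports Main "HOL-Library.Extended_Nat"
begin

definition simple_graph :: "'a set \<Rightarrow> 'a set set \<Rightarrow> bool" where
  "simple_graph V E \<longleftrightarrow> finite V \<and>
     (\<forall>e\<in>E. \<exists>u v. e = {u, v} \<and> u \<noteq> v \<and> u \<in> V \<and> v \<in> V)"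

definition matching :: "'a set set \<Rightarrow> 'a set set \<Rightarrow> bool" where
  "matching E M \<longleftrightarrow> M \<subseteq> E \<and> (\<forall>e1\<in>M. \<forall>e2\<in>M. e1 \<noteq> e2 \<longrightarrow> e1 \<inter> e2 = {})"

definition maximal_matching :: "'a set set \<Rightarrow> 'a set set \<Rightarrow> bool" where
  "maximal_matching E M \<longleftrightarrow> matching E M \<and>
     (\<forall>M'. matching E M' \<and> M \<subseteq> M' \<longrightarrow> M' = M)"

definition equimatchable :: "'a set \<Rightarrow> 'a set set \<Rightarrow> bool" where
  "equimatchable V E \<longleftrightarrow>
     (\<forall>M1 M2. maximal_matching E M1 \<and> maximal_matching E M2 \<longrightarrow> card M1 = card M2)"

definition edge_stable :: "'a set \<Rightarrow> 'a set set \<Rightarrow> bool" where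
  "edge_stable V E \<longleftrightarrow> equimatchable V E \<and> (\<forall>e\<in>E. equimatchable V (E - {e}))"

text \<open>Perfect matching of the induced subgraph G - v.\<close>
definition factor_critical :: "'a set \<Rightarrow> 'a set set \<Rightarrow> bool" where
  "factor_critical V E \<longleftrightarrow>
     (\<forall>v\<in>V. \<exists>M. matching {e\<in>E. v \<notin> e} M \<and> \<Union>M = V - {v})"

definition walk :: "'a set set \<Rightarrow> 'a list \<Rightarrow> bool" where
  "walk E xs \<longleftrightarrow> xs \<noteq> [] \<and> (\<forall>i. Suc i < length xs \<longrightarrow> {xs ! i, xs ! Suc i} \<in> E)"

text \<open>Distance: length of a shortest u-v walk (= shortest path); infinity if none.\<close>
definition dist :: "'a set set \<Rightarrow> 'a \<Rightarrow> 'a \<Rightarrow> enat" where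
  "dist E u v = Inf {enat (length xs - 1) | xs. walk E xs \<and> hd xs = u \<and> last xs = v}"

definition diam :: "'a set \<Rightarrow> 'a set set \<Rightarrow> enat" where
  "diam V E = Sup {dist E u v | u v. u \<in> V \<and> v \<in> V}"

end

theory Submission
  imports Defs
begin

lemma edge_card2:
  assumes "simple_graph V E" "f \<in> E"
  shows "card f = 2" "finite f" "f \<subseteq> V"
  using assms unfolding simple_graph_def by fastforce+

lemma matching_card:
  assumes sg: "simple_graph V E" and m: "matching E M"
  shows "card (\<Union>M) = 2 * card M"
proof -
  have ME: "M \<subseteq> E" using m unfolding matching_def by auto
  have "pairwise disjnt M" using m unfolding matching_def pairwise_def disjnt_def by auto
  moreover have "\<And>A. A \<in> M \<Longrightarrow> finite A" using ME edge_card2[OF sg] by auto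
  ultimately have "card (\<Union>M) = sum card M" by (rule card_Union_disjoint)
  also have "\<dots> = sum (\<lambda>_. 2) M" using ME edge_card2[OF sg] by (intro sum.cong) auto
  finally show ?thesis by simp
qed

lemma matching_sub: "matching {e\<in>E. v \<notin> e} M \<Longrightarrow> matching E M"
  unfolding matching_def by auto

lemma key:
  assumes sg: "simple_graph V E" and fc: "factor_critical V E" and es: "edge_stable V E"
    and u: "u \<in> V" and v: "v \<in> V" and uv: "u \<noteq> v" and nuv: "{u,v} \<notin> E"
  shows "\<exists>w. {u,w} \<in> E \<and> {w,v} \<in> E"
proof (rule ccontr)
  assume nw: "\<not> ?thesis"
  have "\<exists>M. matching {e\<in>E. u \<notin> e} M \<and> \<Union>M = V - {u}" using fc u unfolding factor_critical_def by (rule bspec)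
  then obtain M where M: "matching {e\<in>E. u \<notin> e} M" "\<Union>M = V - {u}" by (elim exE conjE)
  have "\<exists>N. matching {e\<in>E. v \<notin> e} N \<and> \<Union>N = V - {v}" using fc v unfolding factor_critical_def by (rule bspec)
  then obtain N where N: "matching {e\<in>E. v \<notin> e} N" "\<Union>N = V - {v}" by (elim exE conjE)
  have Mm: "matching E M" using M(1) by (rule matching_sub)
  have Nm: "matching E N" using N(1) by (rule matching_sub)
  have ME: "M \<subseteq> E" using Mm unfolding matching_def by auto
  have fin: "finite V" using sg unfolding simple_graph_def by auto
  have "v \<in> \<Union>M" using M v uv by auto
  then obtain e where e: "e \<in> M" "v \<in> e" by auto
  have "e \<in> E" using e ME by auto
  then obtain a b where ab: "e = {a,b}" "a \<noteq> b" using sg unfolding simple_graph_def by blast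
  obtain v' where v': "e = {v,v'}" "v' \<noteq> v" using ab e by auto
  have "v' \<in> \<Union>M" using e v' by auto
  hence v'u: "v' \<noteq> u" "v' \<in> V" using M by auto
  have nuv': "{u,v'} \<notin> E" using nw v' \<open>e \<in> E\<close> by (metis insert_commute)
  define M1 where "M1 = M - {e}"
  have cardM: "card (\<Union>M) = 2 * card M" using matching_card[OF sg Mm] .
  have cardN: "card (\<Union>N) = 2 * card N" using matching_card[OF sg Nm] .
  have "card (\<Union>M) = card (\<Union>N)" using M N u v fin by auto
  hence cMN: "card M = card N" using cardM cardN by simp
  have "M \<subseteq> Pow V" using ME edge_card2(3)[OF sg] by blast
  hence finM: "finite M" using fin by (simp add: finite_subset)
  have cM1: "card M1 = card M - 1" unfolding M1_def using e finM by simp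
  have cMpos: "card M > 0" using e finM card_gt_0_iff by blast
  have eq: "equimatchable V (E - {e})" using es \<open>e \<in> E\<close> unfolding edge_stable_def by auto
  have m1: "matching (E - {e}) M1" using Mm unfolding M1_def matching_def by auto
  have UM1: "\<Union>M1 = V - {u,v,v'}"
  proof
    show "\<Union>M1 \<subseteq> V - {u,v,v'}"
    proof
      fix x assume "x \<in> \<Union>M1"
      then obtain f where f: "f \<in> M" "f \<noteq> e" "x \<in> f" unfolding M1_def by auto
      have "f \<inter> e = {}" using Mm f e unfolding matching_def by auto
      thus "x \<in> V - {u,v,v'}" using f M v' by auto
    qed
    show "V - {u,v,v'} \<subseteq> \<Union>M1" using M v' unfolding M1_def by auto
  qed
  have max1: "maximal_matching (E - {e}) M1"
    unfolding maximal_matching_def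
  proof (intro conjI m1 allI impI)
    fix M' assume h: "matching (E - {e}) M' \<and> M1 \<subseteq> M'"
    show "M' = M1"
    proof (rule ccontr)
      assume "M' \<noteq> M1"
      then obtain f where f: "f \<in> M'" "f \<notin> M1" using h by auto
      have fE: "f \<in> E" "f \<noteq> e" using h f unfolding matching_def by auto
      have mm: "\<forall>e1\<in>M'. \<forall>e2\<in>M'. e1 \<noteq> e2 \<longrightarrow> e1 \<inter> e2 = {}" using h unfolding matching_def by simp
      have disj: "f \<inter> g = {}" if g: "g \<in> M1" for g
      proof -
        have "g \<in> M'" "g \<noteq> f" using g h f by auto
        thus ?thesis using bspec[OF bspec[OF mm f(1)] \<open>g \<in> M'\<close>] by simp
      qed
      have fsub: "f \<subseteq> V" using edge_card2[OF sg fE(1)] by auto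
      have fs: "f \<subseteq> {u,v,v'}"
      proof
        fix x assume x: "x \<in> f"
        show "x \<in> {u,v,v'}"
        proof (rule ccontr)
          assume "x \<notin> {u,v,v'}"
          hence "x \<in> \<Union>M1" using UM1 x fsub by auto
          then obtain g where "g \<in> M1" "x \<in> g" by auto
          thus False using disj x by auto
        qed
      qed
      obtain a b where ab: "f = {a,b}" "a \<noteq> b" using sg fE(1) unfolding simple_graph_def by blast
      have a: "a \<in> {u,v,v'}" and b: "b \<in> {u,v,v'}" using fs ab by auto
      have n1: "{v,u} \<notin> E" "{v',u} \<notin> E" using nuv nuv' by (simp_all add: insert_commute)
      have n2: "{v',v} \<noteq> f" "{v,v'} \<noteq> f" using fE(2) v'(1) by (simp_all add: insert_commute)
      show False using a b ab fE(1) nuv nuv' n1 n2 by auto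
    qed
  qed
  have maxN: "maximal_matching (E - {e}) N"
    unfolding maximal_matching_def
  proof (intro conjI allI impI)
    show mN: "matching (E - {e}) N" using N v' unfolding matching_def by auto
    fix M' assume h: "matching (E - {e}) M' \<and> N \<subseteq> M'"
    show "M' = N"
    proof (rule ccontr)
      assume "M' \<noteq> N"
      then obtain f where f: "f \<in> M'" "f \<notin> N" using h by auto
      have fE: "f \<in> E" using h f unfolding matching_def by auto
      have mm: "\<forall>e1\<in>M'. \<forall>e2\<in>M'. e1 \<noteq> e2 \<longrightarrow> e1 \<inter> e2 = {}" using h unfolding matching_def by simp
      have disj: "f \<inter> g = {}" if g: "g \<in> N" for g
      proof -
        have "g \<in> M'" "g \<noteq> f" using g h f by auto
        thus ?thesis using bspec[OF bspec[OF mm f(1)] \<open>g \<in> M'\<close>] by simp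
      qed
      have fsub: "f \<subseteq> V" using edge_card2[OF sg fE(1)] by auto
      have "f \<subseteq> {v}"
      proof
        fix x assume x: "x \<in> f"
        show "x \<in> {v}"
        proof (rule ccontr)
          assume "x \<notin> {v}"
          hence "x \<in> \<Union>N" using N(2) x fsub by auto
          then obtain g where "g \<in> N" "x \<in> g" by auto
          thus False using disj x by auto
        qed
      qed
      moreover have "card f = 2" using edge_card2[OF sg fE] by simp
      ultimately show False using card_mono[of "{v}" f] by simp
    qed
  qed
  have "card M1 = card N" using eq max1 maxN unfolding equimatchable_def by blast
  thus False using cM1 cMN cMpos by simp
qed

theorem corollary3p3:
  fixes V :: "'a set" and E :: "'a set set"
  assumes "simple_graph V E"
    and "factor_critical V E"
    and "equimatchable V E"
    and "edge_stable V E"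
  shows "diam V E \<le> 2"
  unfolding diam_def
proof (rule Sup_least, clarify)
  fix u v assume u: "u \<in> V" and v: "v \<in> V"
  have "\<exists>xs. walk E xs \<and> hd xs = u \<and> last xs = v \<and> length xs \<le> 3"
  proof (cases "u = v")
    case True
    then show ?thesis by (intro exI[of _ "[u]"]) (auto simp: walk_def)
  next
    case False
    show ?thesis
    proof (cases "{u,v} \<in> E")
      case True
      then show ?thesis by (intro exI[of _ "[u,v]"]) (auto simp: walk_def less_Suc_eq)
    next
      case nE: False
      then obtain w where "{u,w} \<in> E" "{w,v} \<in> E" using key[OF assms(1,2,4) u v False] by blast
      then show ?thesis by (intro exI[of _ "[u,w,v]"]) (auto simp: walk_def less_Suc_eq nth_Cons split: nat.splits)
    qed
  qed
  then obtain xs where xs: "walk E xs" "hd xs = u" "last xs = v" "length xs \<le> 3" by blast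
  have "dist E u v \<le> enat (length xs - 1)" unfolding dist_def
    by (rule Inf_lower) (use xs in blast)
  also have "\<dots> \<le> 2" using xs(4) by (simp add: numeral_eq_enat)
  finally show "dist E u v \<le> 2" .
qed

end
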